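(* Let $p\ge 2$ be an integer and $0<\varphi<2\pi/p$. In the Poincaré disc model of the hyperbolic plane consider the ideal points $v_m=e^{2\pi i m/p}$ and $w_m=e^{i(\varphi+2\pi m/p)}$, $m\in\mathbb Z$ (indices mod $p$). Choose horocycles based at all these points so that the family of horocycles is invariant under the rotation $z\mapsto e^{2\pi i/p}z$ (i.e. the horocycle at $v_{m+1}$ is the rotated horocycle at $v_m$, and likewise for the $w_m$). Let $c=\lambda(v_0,v_1)$, $c'=\lambda(w_0,w_1)$, $a=\lambda(v_0,w_0)$ and $b=\lambda(w_0,v_1)$. Then $$cc'=a^2+2\cos(\pi/p)\,ab+b^2.$$
   Context: For two distinct ideal points $x,y$ with chosen horocycles $h_x,h_y$, the $\lambda$-length is $\lambda(x,y)=e^{\ell/2}$, where $\ell$ is the signed hyperbolic length of the segment of the geodesic joining $x$ and $y$ that lies between $h_x$ and $h_y$ ($\ell$ is negative when the horocycles overlap). Geometrically, $v_0,\dots,v_{p-1}$ are the vertices of an ideal equilateral $p$-gon centered at a $\mathbb Z_p$-orbifold point, with ideal triangles $v_m w_m v_{m+1}$ attached to its sides; $c$ and $c'$ are the $\lambda$-lengths of a side before and after the flip. *)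

theory Defs
  imports Complex_Main
begin

text \<open>Poincare disc model (curvature -1). Ideal points are the points of the unit circle.\<close>

definition hdist :: "complex \<Rightarrow> complex \<Rightarrow> real" where
  "hdist z w = arcosh (1 + 2 * (cmod (z - w))^2 / ((1 - (cmod z)^2) * (1 - (cmod w)^2)))"

text \<open>A horocycle based at the ideal point \<open>\<xi>\<close> is a Euclidean circle inside the disc
  internally tangent to the unit circle at \<open>\<xi>\<close>; it is determined by its Euclidean radius
  \<open>r \<in> (0,1)\<close>: centre \<open>(1-r)\<xi>\<close>, radius \<open>r\<close>.\<close>
definition horocycle :: "complex \<Rightarrow> real \<Rightarrow> complex set" where
  "horocycle \<xi> r = {z. cmod (z - of_real (1 - r) * \<xi>) = r} - {\<xi>}"

definition horoball :: "complex \<Rightarrow> real \<Rightarrow> complex set" where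
  "horoball \<xi> r = {z. cmod (z - of_real (1 - r) * \<xi>) < r}"

text \<open>The geodesic joining two distinct ideal points \<open>\<xi>, \<eta>\<close>: the part inside the open disc of
  the circle (or line) through \<open>\<xi>, \<eta>\<close> orthogonal to the unit circle.\<close>
definition geodesic :: "complex \<Rightarrow> complex \<Rightarrow> complex set" where
  "geodesic \<xi> \<eta> = {z. cmod z < 1 \<and>
      - Im (cnj \<eta> * \<xi>) * ((cmod z)^2 + 1) = 2 * Re (cnj (\<i> * (\<xi> - \<eta>)) * z)}"

definition horo_foot :: "complex \<Rightarrow> real \<Rightarrow> complex \<Rightarrow> complex" where
  "horo_foot \<xi> r \<eta> = (THE z. z \<in> horocycle \<xi> r \<and> z \<in> geodesic \<xi> \<eta>)"

text \<open>Signed length of the segment of the geodesic between the two horocycles: negative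
  exactly when the horoballs overlap, i.e. when the foot on the horocycle at \<open>\<eta>\<close> lies
  inside the horoball at \<open>\<xi>\<close>.\<close>
definition horo_signed_length :: "complex \<Rightarrow> real \<Rightarrow> complex \<Rightarrow> real \<Rightarrow> real" where
  "horo_signed_length \<xi> r \<eta> s =
     (let P = horo_foot \<xi> r \<eta>; Q = horo_foot \<eta> s \<xi>
      in if Q \<in> horoball \<xi> r then - hdist P Q else hdist P Q)"

definition lambda_length :: "complex \<Rightarrow> real \<Rightarrow> complex \<Rightarrow> real \<Rightarrow> real" where
  "lambda_length \<xi> r \<eta> s = exp (horo_signed_length \<xi> r \<eta> s / 2)"

end

theory Submission
  imports Defs
begin

lemma foot_real:
  fixes u v r x y :: real
  assumes uv: "u^2 + v^2 = 1" and u: "u < 1" and r: "0 < r" "r < 1"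
  defines "D \<equiv> (1 - u) + r^2 * (1 + u)"
  shows "((x - (1 - r))^2 + y^2 = r^2 \<and> (x, y) \<noteq> (1, 0) \<and> x^2 + y^2 < 1
          \<and> v * (x^2 + y^2 + 1) = 2 * v * x + 2 * (1 - u) * y)
       \<longleftrightarrow> (x = 1 - 2 * r * (1 - u) / D \<and> y = 2 * r^2 * v / D)"
proof -
  have "u^2 \<le> 1" using uv by (metis le_add_same_cancel1 zero_le_power2)
  hence "\<bar>u\<bar> \<le> 1" by (simp add: abs_square_le_1)
  hence "1 + u \<ge> 0" by simp
  hence "r^2 * (1 + u) \<ge> 0" by simp
  hence Dpos: "D > 0" unfolding D_def using u by linarith
  have v2: "v^2 = (1 - u) * (1 + u)" using uv by (simp add: algebra_simps power2_eq_square)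
  show ?thesis
  proof
    assume h: "(x - (1 - r))^2 + y^2 = r^2 \<and> (x, y) \<noteq> (1, 0) \<and> x^2 + y^2 < 1
          \<and> v * (x^2 + y^2 + 1) = 2 * v * x + 2 * (1 - u) * y"
    hence h1: "(x - (1 - r))^2 + y^2 = r^2" and h2: "(x, y) \<noteq> (1, 0)"
      and h3: "v * (x^2 + y^2 + 1) = 2 * v * x + 2 * (1 - u) * y" by auto
    have hs: "x^2 + y^2 = 2*(1-r)*x - 1 + 2*r" using h1 by (simp add: algebra_simps power2_eq_square)
    have "r * v * (1 - x) = (1 - u) * y" using h3 hs by (simp add: algebra_simps)
    hence yv: "y = r * v * (1 - x) / (1 - u)" using u by (simp add: field_simps)
    have x1: "x \<noteq> 1" using h2 h1 r by auto
    have e: "(1 - x)^2 - 2 * r * (1 - x) + y^2 = 0" using h1 by (simp add: algebra_simps power2_eq_square)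
    have e2: "((1 - x)^2 - 2 * r * (1 - x)) + (r * v * (1 - x) / (1 - u))^2 = 0"
      using e yv by simp
    have q: "(r * v * (1 - x) / (1 - u))^2 * (1 - u)^2 = r^2 * (1 - x)^2 * ((1 - u) * (1 + u))"
      using u v2 by (simp add: power_divide power_mult_distrib)
    have "(((1 - x)^2 - 2 * r * (1 - x)) + (r * v * (1 - x) / (1 - u))^2) * (1 - u)^2 = 0"
      using e2 by simp
    hence "((1 - x)^2 - 2 * r * (1 - x)) * (1 - u)^2 + r^2 * (1 - x)^2 * ((1 - u) * (1 + u)) = 0"
      using q by (simp add: distrib_right)
    moreover have "((1 - x)^2 - 2 * r * (1 - x)) * (1 - u)^2 + r^2 * (1 - x)^2 * ((1 - u) * (1 + u))
       = (1 - x) * (1 - u) * ((1 - x) * (1 - u) - 2 * r * (1 - u) + r^2 * (1 + u) * (1 - x))"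
      by algebra
    ultimately have "(1 - x) * (1 - u) * ((1 - x) * (1 - u) - 2 * r * (1 - u) + r^2 * (1 + u) * (1 - x)) = 0"
      by simp
    hence "(1 - x) * (1 - u) - 2 * r * (1 - u) + r^2 * (1 + u) * (1 - x) = 0" using x1 u by simp
    hence xD: "(1 - x) * D = 2 * r * (1 - u)" unfolding D_def by (simp add: algebra_simps)
    hence xe: "x = 1 - 2 * r * (1 - u) / D" using Dpos by (simp add: field_simps)
    have y1: "y * (1 - u) = r * v * (1 - x)" using yv u by simp
    have "y * D * (1 - u) = (y * (1 - u)) * D" by (simp add: ac_simps)
    also have "\<dots> = r * v * ((1 - x) * D)" unfolding y1 by (simp add: ac_simps)
    also have "\<dots> = (2 * r^2 * v) * (1 - u)" unfolding xD by (simp add: power2_eq_square ac_simps)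
    finally have "y * D = 2 * r^2 * v" using u by simp
    hence "y = 2 * r^2 * v / D" using Dpos by (simp add: field_simps)
    thus "x = 1 - 2 * r * (1 - u) / D \<and> y = 2 * r^2 * v / D" using xe by simp
  next
    assume h: "x = 1 - 2 * r * (1 - u) / D \<and> y = 2 * r^2 * v / D"
    hence xe: "x * D = D - 2 * r * (1 - u)" and ye: "y * D = 2 * r^2 * v" using Dpos by (auto simp: field_simps)
    have "((x - (1 - r))^2 + y^2) * D^2 = r^2 * D^2"
    proof -
      have "((x - (1 - r))^2 + y^2) * D^2 = (x * D - (1 - r) * D)^2 + (y*D)^2" by (simp add: algebra_simps power2_eq_square)
      also have "\<dots> = (D - 2 * r * (1 - u) - (1 - r) * D)^2 + (2 * r^2 * v)^2" by (simp only: xe ye)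
      also have "\<dots> = r^2 * D^2" unfolding D_def using v2 by algebra
      finally show ?thesis .
    qed
    hence c1: "(x - (1 - r))^2 + y^2 = r^2" using Dpos by simp
    have c2: "x \<noteq> 1" using xe r u Dpos by auto
    have "(x^2 + y^2) * D^2 = (x * D)^2 + (y * D)^2" by (simp add: algebra_simps power2_eq_square)
    have hs: "x^2 + y^2 = 2*(1-r)*x - 1 + 2*r" using c1 by (simp add: algebra_simps power2_eq_square)
    have "2 * r * (1 - u) / D > 0" using r u Dpos by simp
    hence "x < 1" using h by linarith
    hence lt: "2 * (1 - r) * x < 2 * (1 - r)" using mult_strict_left_mono[of x 1 "2 * (1 - r)"] r by simp
    have c3: "x^2 + y^2 < 1" unfolding hs using lt by (simp add: algebra_simps)
    have "r * v * (1 - x) = (1 - u) * y"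
    proof -
      have xD2: "(1 - x) * D = 2 * r * (1 - u)" using xe by (simp add: algebra_simps)
      have "r * v * (1 - x) * D = r * v * ((1 - x) * D)" by simp
      also have "\<dots> = r * v * (2 * r * (1 - u))" by (simp only: xD2)
      also have "\<dots> = (1 - u) * (2 * r^2 * v)" by (simp add: power2_eq_square)
      also have "\<dots> = (1 - u) * (y * D)" by (simp only: ye)
      finally have "r * v * (1 - x) * D = (1 - u) * y * D" by (simp add: ac_simps)
      thus ?thesis using Dpos by simp
    qed
    moreover have "v * (x^2 + y^2 + 1) = 2 * v * x + 2 * (r * v * (1 - x))" using hs by algebra
    ultimately have c4: "v * (x^2 + y^2 + 1) = 2 * v * x + 2 * (1 - u) * y" by simp
    show "(x - (1 - r))^2 + y^2 = r^2 \<and> (x, y) \<noteq> (1, 0) \<and> x^2 + y^2 < 1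
          \<and> v * (x^2 + y^2 + 1) = 2 * v * x + 2 * (1 - u) * y" using c1 c2 c3 c4 by auto
  qed
qed

lemma t1:
  fixes x y r :: real
  assumes "0 < r"
  shows "Complex x y \<in> horocycle 1 r \<longleftrightarrow> (x - (1 - r))^2 + y^2 = r^2 \<and> (x, y) \<noteq> (1, 0)"
proof -
  have "cmod (Complex x y - of_real (1 - r) * 1) = r \<longleftrightarrow> (cmod (Complex x y - of_real (1 - r) * 1))^2 = r^2"
    using assms by (simp add: power2_eq_iff_nonneg)
  also have "(cmod (Complex x y - of_real (1 - r) * 1))^2 = (x - (1 - r))^2 + y^2"
    unfolding cmod_power2 by simp
  finally show ?thesis unfolding horocycle_def by (auto simp: complex_eq_iff)
qed

lemma t2:
  fixes x y :: real
  shows "Complex x y \<in> geodesic 1 e \<longleftrightarrow> x^2 + y^2 < 1 \<and>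
       Im e * (x^2 + y^2 + 1) = 2 * Im e * x + 2 * (1 - Re e) * y"
proof -
  have "cmod (Complex x y) < 1 \<longleftrightarrow> (cmod (Complex x y))^2 < 1"
    by (simp add: abs_square_less_1)
  moreover have "(cmod (Complex x y))^2 = x^2 + y^2" unfolding cmod_power2 by simp
  moreover have "Re (cnj (\<i> * (1 - e)) * Complex x y) = Im e * x + (1 - Re e) * y"
    by (simp add: algebra_simps)
  moreover have "- Im (cnj e * 1) = Im e" by simp
  ultimately show ?thesis unfolding geodesic_def by auto
qed

definition F :: "real \<Rightarrow> complex \<Rightarrow> complex" where
  "F r e = Complex (1 - 2*r*(1 - Re e)/((1 - Re e) + r^2*(1 + Re e)))
                   (2*r^2*Im e/((1 - Re e) + r^2*(1 + Re e)))"

lemma unit_coords: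
  assumes "cmod e = 1" "e \<noteq> 1"
  shows "(Re e)^2 + (Im e)^2 = 1" "Re e < 1"
proof -
  show h: "(Re e)^2 + (Im e)^2 = 1" using assms(1) by (simp add: cmod_power2[symmetric])
  have "(Re e)^2 \<le> 1" using h by (metis le_add_same_cancel1 zero_le_power2)
  hence "\<bar>Re e\<bar> \<le> 1" by (simp add: abs_square_le_1)
  hence "Re e \<le> 1" by simp
  moreover have "Re e \<noteq> 1"
  proof
    assume "Re e = 1"
    hence "Im e = 0" using h by simp
    thus False using \<open>Re e = 1\<close> assms(2) by (simp add: complex_eq_iff)
  qed
  ultimately show "Re e < 1" by simp
qed

lemma foot1_mem:
  assumes "cmod e = 1" "e \<noteq> 1" "0 < r" "r < 1"
  shows "(z \<in> horocycle 1 r \<and> z \<in> geodesic 1 e) \<longleftrightarrow> z = F r e"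
proof -
  obtain x y where z: "z = Complex x y" by (metis complex.collapse)
  have uv: "(Re e)^2 + (Im e)^2 = 1" and u: "Re e < 1" using unit_coords assms by auto
  have "z = F r e \<longleftrightarrow> (x = 1 - 2 * r * (1 - Re e) / ((1 - Re e) + r^2 * (1 + Re e)) \<and>
      y = 2 * r^2 * Im e / ((1 - Re e) + r^2 * (1 + Re e)))"
    unfolding F_def z by simp
  moreover have "(z \<in> horocycle 1 r \<and> z \<in> geodesic 1 e) \<longleftrightarrow> ((x - (1 - r))^2 + y^2 = r^2 \<and> (x, y) \<noteq> (1, 0) \<and> x^2 + y^2 < 1 \<and>
       Im e * (x^2 + y^2 + 1) = 2 * Im e * x + 2 * (1 - Re e) * y)"
    unfolding z t1[OF assms(3)] t2 by blast
  ultimately show ?thesis using foot_real[OF uv u assms(3,4), of x y] by blast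
qed

lemma cnj_mult_unit: "cmod w = 1 \<Longrightarrow> cnj w * w = 1"
  by (metis complex_norm_square mult.commute of_real_1 power_one)

lemma rot_horocycle:
  assumes "cmod w = 1"
  shows "w * z \<in> horocycle (w * xi) r \<longleftrightarrow> z \<in> horocycle xi r"
proof -
  have w0: "w \<noteq> 0" using assms by auto
  have "w * z - of_real (1 - r) * (w * xi) = w * (z - of_real (1 - r) * xi)" by (simp add: algebra_simps)
  hence "cmod (w * z - of_real (1 - r) * (w * xi)) = cmod (z - of_real (1 - r) * xi)"
    by (simp add: norm_mult assms)
  moreover have "w * z = w * xi \<longleftrightarrow> z = xi" using w0 by simp
  ultimately show ?thesis unfolding horocycle_def by simp
qed

lemma rot_horoball:
  assumes "cmod w = 1"
  shows "w * z \<in> horoball (w * xi) r \<longleftrightarrow> z \<in> horoball xi r"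
proof -
  have "w * z - of_real (1 - r) * (w * xi) = w * (z - of_real (1 - r) * xi)" by (simp add: algebra_simps)
  hence "cmod (w * z - of_real (1 - r) * (w * xi)) = cmod (z - of_real (1 - r) * xi)"
    by (simp add: norm_mult assms)
  thus ?thesis unfolding horoball_def by simp
qed

lemma rot_geodesic:
  assumes "cmod w = 1"
  shows "w * z \<in> geodesic (w * xi) (w * eta) \<longleftrightarrow> z \<in> geodesic xi eta"
proof -
  have c: "cnj w * w = 1" using cnj_mult_unit[OF assms] .
  have n: "cmod (w * z) = cmod z" by (simp add: norm_mult assms)
  have "cnj (w * eta) * (w * xi) = (cnj w * w) * (cnj eta * xi)" by (simp add: ac_simps)
  hence a: "cnj (w * eta) * (w * xi) = cnj eta * xi" using c by simp
  have "cnj (\<i> * (w * xi - w * eta)) * (w * z) = (cnj w * w) * (cnj (\<i> * (xi - eta)) * z)"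
    by (simp add: algebra_simps)
  hence b: "cnj (\<i> * (w * xi - w * eta)) * (w * z) = cnj (\<i> * (xi - eta)) * z" using c by simp
  show ?thesis by (simp only: geodesic_def mem_Collect_eq a b n)
qed

lemma foot_gen:
  assumes "cmod xi = 1" "cmod eta = 1" "xi \<noteq> eta" "0 < r" "r < 1"
  shows "horo_foot xi r eta = xi * F r (cnj xi * eta)"
proof -
  define e where "e = cnj xi * eta"
  have c: "cnj xi * xi = 1" using cnj_mult_unit[OF assms(1)] .
  have ee: "xi * e = eta" unfolding e_def using c by (metis mult.assoc mult.commute mult.left_neutral)
  have e1: "cmod e = 1" unfolding e_def using assms by (simp add: norm_mult)
  have en: "e \<noteq> 1" using ee assms(3) by auto
  have key: "\<And>z. (z \<in> horocycle xi r \<and> z \<in> geodesic xi eta) \<longleftrightarrow> z = xi * F r e"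
  proof -
    fix z
    have zz: "z = xi * (cnj xi * z)" using c by (metis mult.assoc mult.commute mult.left_neutral)
    have "(z \<in> horocycle xi r \<and> z \<in> geodesic xi eta) \<longleftrightarrow>
          (xi * (cnj xi * z) \<in> horocycle (xi * 1) r \<and> xi * (cnj xi * z) \<in> geodesic (xi * 1) (xi * e))"
      by (simp only: zz[symmetric] mult_1_right ee)
    also have "\<dots> \<longleftrightarrow> (cnj xi * z \<in> horocycle 1 r \<and> cnj xi * z \<in> geodesic 1 e)"
      using rot_horocycle[OF assms(1)] rot_geodesic[OF assms(1)] by blast
    also have "\<dots> \<longleftrightarrow> cnj xi * z = F r e" using foot1_mem[OF e1 en assms(4,5)] by blast
    also have "\<dots> \<longleftrightarrow> z = xi * F r e" using zz by (metis mult.assoc c mult.left_neutral)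
    finally show "(z \<in> horocycle xi r \<and> z \<in> geodesic xi eta) \<longleftrightarrow> z = xi * F r e" .
  qed
  show ?thesis unfolding horo_foot_def e_def[symmetric] using key by (intro the_equality) blast+
qed

lemma F_norm:
  assumes "cmod e = 1" "e \<noteq> 1" "0 < r" "r < 1"
  shows "1 - (cmod (F r e))^2 = 4 * (1 - r) * r * (1 - Re e) / ((1 - Re e) + r^2 * (1 + Re e))"
    and "(1 - Re e) + r^2 * (1 + Re e) > 0"
proof -
  have uv: "(Re e)^2 + (Im e)^2 = 1" and u: "Re e < 1" using unit_coords assms by auto
  define D where "D = (1 - Re e) + r^2 * (1 + Re e)"
  have "(Re e)^2 \<le> 1" using uv by (metis le_add_same_cancel1 zero_le_power2)
  hence "\<bar>Re e\<bar> \<le> 1" by (simp add: abs_square_le_1)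
  hence "1 + Re e \<ge> 0" by simp
  hence "r^2 * (1 + Re e) \<ge> 0" by simp
  hence Dpos: "D > 0" unfolding D_def using u by linarith
  thus "(1 - Re e) + r^2 * (1 + Re e) > 0" unfolding D_def .
  have "F r e \<in> horocycle 1 r" using foot1_mem[OF assms] by blast
  hence "(Re (F r e) - (1 - r))^2 + (Im (F r e))^2 = r^2"
    using t1[OF assms(3), of "Re (F r e)" "Im (F r e)"] by simp
  hence "1 - (cmod (F r e))^2 = 2 * (1 - r) * (1 - Re (F r e))"
    unfolding cmod_power2 by algebra
  also have "1 - Re (F r e) = 2 * r * (1 - Re e) / D" unfolding F_def D_def by simp
  also have "2 * (1 - r) * (2 * r * (1 - Re e) / D) = 4 * (1 - r) * r * (1 - Re e) / D"
    by (simp add: field_simps)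
  finally show "1 - (cmod (F r e))^2 = 4 * (1 - r) * r * (1 - Re e) / ((1 - Re e) + r^2 * (1 + Re e))"
    unfolding D_def .
qed

lemma poly1:
  fixes u v r s :: real
  assumes uv: "u^2 + v^2 = 1"
  defines "Dr \<equiv> (1 - u) + r^2 * (1 + u)" and "Ds \<equiv> (1 - u) + s^2 * (1 + u)"
  shows "(Ds * (Dr - 2 * r * (1 - u)) - Dr * (u * (Ds - 2 * s * (1 - u)) + 2 * s^2 * v^2))^2
       + (2 * r^2 * v * Ds - Dr * (v * (Ds - 2 * s * (1 - u)) - 2 * s^2 * u * v))^2
       = 2 * (1 - u) * ((1 - u) * (1 - r) * (1 - s) - 2 * r * s)^2 * Dr * Ds"
  unfolding Dr_def Ds_def using uv by algebra

lemma poly2: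
  fixes u v r s :: real
  assumes uv: "u^2 + v^2 = 1"
  defines "Ds \<equiv> (1 - u) + s^2 * (1 + u)"
  shows "(Ds - 4 * (1 - s) * s * (1 - u)) - 2 * (1 - r) * (u * (Ds - 2 * s * (1 - u)) + 2 * s^2 * v^2)
       + (1 - 2 * r) * Ds = 2 * (1 - u) * (1 - s) * ((1 - u) * (1 - r) * (1 - s) - 2 * r * s)"
  unfolding Ds_def using uv by algebra


lemma norm_less_sq: "0 < r \<Longrightarrow> (cmod z < r) \<longleftrightarrow> (cmod z)^2 < r^2"
  by (meson norm_ge_zero power2_less_imp_less power_strict_mono less_imp_le zero_less_numeral
        order.strict_trans1 pos2)

lemma arcosh_L: "0 < (L::real) \<Longrightarrow> arcosh ((L + inverse L) / 2) = \<bar>ln L\<bar>"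
proof -
  assume L: "0 < L"
  have "(L + inverse L) / 2 = cosh (ln L)" using cosh_ln_real[OF L] by simp
  also have "\<dots> = cosh \<bar>ln L\<bar>" by (cases "ln L \<ge> 0") auto
  finally show ?thesis using arcosh_cosh_real[of "\<bar>ln L\<bar>"] by simp
qed

lemma div_cancel: "(c::real) \<noteq> 0 \<Longrightarrow> (x / c) / (y / c) = x / y"
  by (cases "y = 0") (simp_all add: field_simps)

lemma aux1: "(a::real) \<noteq> 0 \<Longrightarrow> b \<noteq> 0 \<Longrightarrow> c \<noteq> 0 \<Longrightarrow> r \<noteq> 0 \<Longrightarrow> s \<noteq> 0 \<Longrightarrow>
   (2 * (2 * a * K^2)) / ((4 * b * r * a) * (4 * c * s * a)) = K^2 / (4 * r * s * (a * b * c))"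
  by (simp add: field_simps power2_eq_square)

lemma aux2: "(M::real) \<noteq> 0 \<Longrightarrow> r \<noteq> 0 \<Longrightarrow> s \<noteq> 0 \<Longrightarrow>
   1 + (M - 2 * r * s)^2 / (4 * r * s * M) = (M / (2 * r * s) + inverse (M / (2 * r * s))) / 2"
  by (simp add: field_simps power2_eq_square)

lemma core:
  assumes e1: "cmod e = 1" and en: "e \<noteq> 1" and r: "0 < r" "r < 1" and s: "0 < s" "s < 1"
  defines "L \<equiv> (1 - Re e) * (1 - r) * (1 - s) / (2 * r * s)"
  shows "L > 0" "hdist (F r e) (e * F s (cnj e)) = \<bar>ln L\<bar>"
    "e * F s (cnj e) \<in> horoball 1 r \<longleftrightarrow> L < 1"
proof -
  define u where "u = Re e"
  define v where "v = Im e"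
  have uv: "u^2 + v^2 = 1" and u: "u < 1" using unit_coords[OF e1 en] u_def v_def by auto
  define Dr where "Dr = (1 - u) + r^2 * (1 + u)"
  define Ds where "Ds = (1 - u) + s^2 * (1 + u)"
  define M where "M = (1 - u) * (1 - r) * (1 - s)"
  define K where "K = (1 - u) * (1 - r) * (1 - s) - 2 * r * s"
  have ce1: "cmod (cnj e) = 1" "cnj e \<noteq> 1" using e1 en by auto
  have nP: "1 - (cmod (F r e))^2 = 4 * (1 - r) * r * (1 - u) / Dr" and Dr: "Dr > 0"
    using F_norm[OF e1 en r] unfolding u_def Dr_def by auto
  have nF: "1 - (cmod (F s (cnj e)))^2 = 4 * (1 - s) * s * (1 - u) / Ds" and Ds: "Ds > 0"
    using F_norm[OF ce1 s] unfolding u_def Ds_def by auto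
  have nQ: "1 - (cmod (e * F s (cnj e)))^2 = 4 * (1 - s) * s * (1 - u) / Ds"
    using nF by (simp add: norm_mult e1)
  have Mpos: "M > 0" unfolding M_def using u r s by simp
  show Lpos: "L > 0" unfolding L_def using u r s u_def by simp
  have LM: "L = M / (2 * r * s)" unfolding L_def M_def u_def by simp
  have Px: "Re (F r e) = (Dr - 2 * r * (1 - u)) / Dr"
  proof -
    have "Re (F r e) = 1 - 2 * r * (1 - u) / Dr" unfolding F_def u_def Dr_def by simp
    thus ?thesis using Dr by (simp add: field_simps)
  qed
  have Py: "Im (F r e) = 2 * r^2 * v / Dr" unfolding F_def v_def Dr_def u_def by simp
  have Fx: "Re (F s (cnj e)) = 1 - 2 * s * (1 - u) / Ds" unfolding F_def u_def Ds_def by simp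
  have Fy: "Im (F s (cnj e)) = - (2 * s^2 * v / Ds)" unfolding F_def v_def Ds_def u_def by simp
  have Qx: "Re (e * F s (cnj e)) = (u * (Ds - 2 * s * (1 - u)) + 2 * s^2 * v^2) / Ds"
  proof -
    have "Re (e * F s (cnj e)) = u * (1 - 2 * s * (1 - u) / Ds) - v * (- (2 * s^2 * v / Ds))"
      by (simp add: Fx Fy u_def v_def)
    thus ?thesis using Ds by (simp add: field_simps power2_eq_square)
  qed
  have Qy: "Im (e * F s (cnj e)) = (v * (Ds - 2 * s * (1 - u)) - 2 * s^2 * u * v) / Ds"
  proof -
    have "Im (e * F s (cnj e)) = u * (- (2 * s^2 * v / Ds)) + v * (1 - 2 * s * (1 - u) / Ds)"
      by (simp add: Fx Fy u_def v_def)
    also have "\<dots> = (v * (Ds - 2 * s * (1 - u)) - 2 * s^2 * u * v) / Ds"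
      using Ds by (simp add: field_simps power2_eq_square)
    finally show ?thesis .
  qed
  define X where "X = Ds * (Dr - 2 * r * (1 - u)) - Dr * (u * (Ds - 2 * s * (1 - u)) + 2 * s^2 * v^2)"
  define Y where "Y = 2 * r^2 * v * Ds - Dr * (v * (Ds - 2 * s * (1 - u)) - 2 * s^2 * u * v)"
  have dX: "Re (F r e - e * F s (cnj e)) = X / (Dr * Ds)"
  proof -
    have "Re (F r e - e * F s (cnj e)) = Re (F r e) - Re (e * F s (cnj e))" by (simp only: minus_complex.sel)
    also have "\<dots> = X / (Dr * Ds)" unfolding Px Qx X_def using Dr Ds by (simp add: field_simps)
    finally show ?thesis .
  qed
  have dY: "Im (F r e - e * F s (cnj e)) = Y / (Dr * Ds)"
  proof -
    have "Im (F r e - e * F s (cnj e)) = Im (F r e) - Im (e * F s (cnj e))" by (simp only: minus_complex.sel)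
    also have "\<dots> = Y / (Dr * Ds)" unfolding Py Qy Y_def using Dr Ds by (simp add: field_simps)
    finally show ?thesis .
  qed
  have XY: "X^2 + Y^2 = 2 * (1 - u) * K^2 * Dr * Ds"
    unfolding X_def Y_def K_def Dr_def Ds_def using poly1[OF uv, where r=r and s=s] by simp
  have dPQ: "(cmod (F r e - e * F s (cnj e)))^2 = 2 * (1 - u) * K^2 / (Dr * Ds)"
  proof -
    have "(cmod (F r e - e * F s (cnj e)))^2 = (X / (Dr * Ds))^2 + (Y / (Dr * Ds))^2"
      unfolding cmod_power2 dX dY ..
    also have "\<dots> = (X^2 + Y^2) / (Dr * Ds)^2" by (simp add: power_divide add_divide_distrib)
    also have "\<dots> = 2 * (1 - u) * K^2 / (Dr * Ds)" unfolding XY using Dr Ds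
      by (simp add: field_simps power2_eq_square)
    finally show ?thesis .
  qed
  have step1: "2 * (2 * (1 - u) * K^2 / (Dr * Ds)) / ((4 * (1 - r) * r * (1 - u) / Dr) * (4 * (1 - s) * s * (1 - u) / Ds))
      = K^2 / (4 * r * s * M)"
  proof -
    have nz: "1 - u \<noteq> 0" "1 - r \<noteq> 0" "1 - s \<noteq> 0" "Dr \<noteq> 0" "Ds \<noteq> 0" "r \<noteq> 0" "s \<noteq> 0"
      using Dr Ds u r s by auto
    have a: "(4 * (1 - r) * r * (1 - u) / Dr) * (4 * (1 - s) * s * (1 - u) / Ds)
        = ((4 * (1 - r) * r * (1 - u)) * (4 * (1 - s) * s * (1 - u))) / (Dr * Ds)" by simp
    have b: "(2 * (2 * (1 - u) * K^2) / (Dr * Ds)) / (((4 * (1 - r) * r * (1 - u)) * (4 * (1 - s) * s * (1 - u))) / (Dr * Ds))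
        = (2 * (2 * (1 - u) * K^2)) / ((4 * (1 - r) * r * (1 - u)) * (4 * (1 - s) * s * (1 - u)))"
      using nz by (simp add: div_cancel)
    have c: "(2 * (2 * (1 - u) * K^2)) / ((4 * (1 - r) * r * (1 - u)) * (4 * (1 - s) * s * (1 - u)))
        = K^2 / (4 * r * s * M)"
      unfolding M_def using aux1[OF nz(1,2,3,6,7), of K] by simp
    have b0: "2 * (2 * (1 - u) * K^2 / (Dr * Ds)) = (2 * (2 * (1 - u) * K^2)) / (Dr * Ds)" by simp
    show ?thesis by (simp only: a b0 b c)
  qed
  have step2: "1 + K^2 / (4 * r * s * M) = (L + inverse L) / 2"
  proof -
    have "K = M - 2 * r * s" unfolding K_def M_def ..
    thus ?thesis unfolding LM using aux2[of M r s] Mpos r s by simp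
  qed
  have arg: "1 + 2 * (cmod (F r e - e * F s (cnj e)))^2 /
      ((1 - (cmod (F r e))^2) * (1 - (cmod (e * F s (cnj e)))^2)) = (L + inverse L) / 2"
    unfolding dPQ nP nQ step1 step2 ..
  show "hdist (F r e) (e * F s (cnj e)) = \<bar>ln L\<bar>"
    unfolding hdist_def arg using arcosh_L[OF Lpos] .
  have "e * F s (cnj e) \<in> horoball 1 r \<longleftrightarrow> (cmod (e * F s (cnj e) - of_real (1 - r) * 1))^2 < r^2"
    unfolding horoball_def using norm_less_sq[OF r(1)] by simp
  also have "(cmod (e * F s (cnj e) - of_real (1 - r) * 1))^2 - r^2
      = (cmod (e * F s (cnj e)))^2 - 2 * (1 - r) * Re (e * F s (cnj e)) + 1 - 2 * r"
    unfolding cmod_power2 by (simp add: power2_eq_square algebra_simps)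
  hence "(cmod (e * F s (cnj e) - of_real (1 - r) * 1))^2 < r^2 \<longleftrightarrow>
      (cmod (e * F s (cnj e)))^2 - 2 * (1 - r) * Re (e * F s (cnj e)) + 1 - 2 * r < 0" by linarith
  also have "(cmod (e * F s (cnj e)))^2 - 2 * (1 - r) * Re (e * F s (cnj e)) + 1 - 2 * r
      = ((Ds - 4 * (1 - s) * s * (1 - u)) - 2 * (1 - r) * (u * (Ds - 2 * s * (1 - u)) + 2 * s^2 * v^2)
       + (1 - 2 * r) * Ds) / Ds"
  proof -
    have "(cmod (e * F s (cnj e)))^2 = 1 - 4 * (1 - s) * s * (1 - u) / Ds" using nQ by simp
    thus ?thesis unfolding Qx using Ds by (simp add: field_simps)
  qed
  also have "\<dots> = 2 * (1 - u) * (1 - s) * K / Ds"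
    unfolding K_def Ds_def using poly2[OF uv, where r=r and s=s] by simp
  also have "2 * (1 - u) * (1 - s) * K / Ds < 0 \<longleftrightarrow> K < 0"
    using u s Ds by (simp add: divide_less_0_iff mult_less_0_iff)
  also have "K < 0 \<longleftrightarrow> L < 1" unfolding LM K_def M_def using r s by (simp add: field_simps)
  finally show "e * F s (cnj e) \<in> horoball 1 r \<longleftrightarrow> L < 1" .
qed

lemma hdist_rot: "cmod w = 1 \<Longrightarrow> hdist (w * a) (w * b) = hdist a b"
proof -
  assume w: "cmod w = 1"
  have "w * a - w * b = w * (a - b)" by (simp add: algebra_simps)
  thus ?thesis unfolding hdist_def by (simp add: norm_mult w)
qed

lemma lambda_gen:
  assumes xi: "cmod xi = 1" and eta: "cmod eta = 1" and ne: "xi \<noteq> eta"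
    and r: "0 < r" "r < 1" and s: "0 < s" "s < 1"
  shows "lambda_length xi r eta s = sqrt ((1 - Re (cnj xi * eta)) * (1 - r) * (1 - s) / (2 * r * s))"
proof -
  define e where "e = cnj xi * eta"
  have c: "cnj xi * xi = 1" using cnj_mult_unit[OF xi] .
  have ee: "xi * e = eta" unfolding e_def using c by (metis mult.assoc mult.commute mult.left_neutral)
  have e1: "cmod e = 1" unfolding e_def using xi eta by (simp add: norm_mult)
  have en: "e \<noteq> 1" using ee ne by auto
  have ce: "cnj eta * xi = cnj e" unfolding e_def by (simp add: mult.commute)
  have P: "horo_foot xi r eta = xi * F r e" unfolding e_def using foot_gen[OF xi eta ne r] .
  have Q: "horo_foot eta s xi = xi * (e * F s (cnj e))"
    using foot_gen[OF eta xi ne[symmetric] s] ce ee by (simp add: mult.assoc)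
  define L where "L = (1 - Re e) * (1 - r) * (1 - s) / (2 * r * s)"
  have Lpos: "L > 0" and hd: "hdist (F r e) (e * F s (cnj e)) = \<bar>ln L\<bar>"
    and hb: "e * F s (cnj e) \<in> horoball 1 r \<longleftrightarrow> L < 1"
    using core[OF e1 en r s] unfolding L_def by auto
  have hb2: "xi * (e * F s (cnj e)) \<in> horoball xi r \<longleftrightarrow> L < 1"
    using rot_horoball[OF xi, of "e * F s (cnj e)" 1 r] hb by simp
  have sl: "horo_signed_length xi r eta s = ln L"
  proof -
    have "horo_signed_length xi r eta s =
       (if L < 1 then - \<bar>ln L\<bar> else \<bar>ln L\<bar>)"
      unfolding horo_signed_length_def Let_def P Q hdist_rot[OF xi] hd hb2 ..
    also have "\<dots> = ln L" using Lpos by auto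
    finally show ?thesis .
  qed
  have "exp (ln L / 2) = sqrt L"
    using Lpos by (simp add: powr_half_sqrt[symmetric] powr_def)
  thus ?thesis unfolding lambda_length_def sl L_def e_def .
qed

lemma lam_cis:
  assumes x: "0 < x" "x < pi" and r: "0 < r" "r < 1" and s: "0 < s" "s < 1"
    and xi: "xi = cis al" and eta: "eta = cis (al + 2 * x)"
  shows "lambda_length xi r eta s = sin x * sqrt ((1 - r) / r * ((1 - s) / s))"
proof -
  have sx: "sin x > 0" using sin_gt_zero x by auto
  have re: "Re (cnj xi * eta) = 1 - 2 * (sin x)^2"
  proof -
    have "cnj xi * eta = cis (2 * x)" unfolding xi eta by (simp add: cis_cnj cis_mult)
    thus ?thesis by (simp add: cos_double_sin)
  qed
  have ne: "xi \<noteq> eta"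
  proof
    assume "xi = eta"
    moreover have "cmod xi = 1" using xi by simp
    ultimately have "cnj xi * eta = 1" using cnj_mult_unit[of xi] by simp
    hence "Re (cnj xi * eta) = 1" by simp
    thus False using re sx by simp
  qed
  have "lambda_length xi r eta s = sqrt ((1 - Re (cnj xi * eta)) * (1 - r) * (1 - s) / (2 * r * s))"
    using lambda_gen[OF _ _ ne r s] xi eta by simp
  also have "(1 - Re (cnj xi * eta)) * (1 - r) * (1 - s) / (2 * r * s) = (sin x)^2 * ((1 - r) / r * ((1 - s) / s))"
    unfolding re using r s by (simp add: field_simps)
  also have "sqrt \<dots> = sin x * sqrt ((1 - r) / r * ((1 - s) / s))"
    using sx by (simp only: real_sqrt_mult real_sqrt_abs abs_of_pos)
  finally show ?thesis .
qed

lemma trig_id: fixes t x :: real shows "(sin t)^2 = (sin x)^2 + 2 * cos t * sin x * sin (t - x) + (sin (t - x))^2"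
proof -
  have "sin (t - x) = sin t * cos x - cos t * sin x" by (rule sin_diff)
  moreover have "(sin t)^2 + (cos t)^2 = 1" "(sin x)^2 + (cos x)^2 = 1" by simp_all
  ultimately show ?thesis by algebra
qed

theorem mainTheorem2:
  fixes p :: nat and \<phi> :: real and h :: "complex \<Rightarrow> real"
    and v w :: "int \<Rightarrow> complex" and a b c c' :: real
  assumes "p \<ge> 2"
    and "0 < \<phi>" and "\<phi> < 2 * pi / real p"
    and v_def: "\<And>m. v m = cis (2 * pi * real_of_int m / real p)"
    and w_def: "\<And>m. w m = cis (\<phi> + 2 * pi * real_of_int m / real p)"
    and h_pos: "\<And>m. 0 < h (v m) \<and> h (v m) < 1 \<and> 0 < h (w m) \<and> h (w m) < 1"
    and h_inv: "\<And>m. h (v (m + 1)) = h (v m) \<and> h (w (m + 1)) = h (w m)"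
    and c_def: "c = lambda_length (v 0) (h (v 0)) (v 1) (h (v 1))"
    and c'_def: "c' = lambda_length (w 0) (h (w 0)) (w 1) (h (w 1))"
    and a_def: "a = lambda_length (v 0) (h (v 0)) (w 0) (h (w 0))"
    and b_def: "b = lambda_length (w 0) (h (w 0)) (v 1) (h (v 1))"
  shows "c * c' = a^2 + 2 * cos (pi / real p) * a * b + b^2"
proof -
  define t where "t = pi / real p"
  define x where "x = \<phi> / 2"
  define hv where "hv = h (v 0)"
  define hw where "hw = h (w 0)"
  have p0: "real p > 0" using assms(1) by simp
  have hv: "0 < hv" "hv < 1" and hw: "0 < hw" "hw < 1" using h_pos[of 0] unfolding hv_def hw_def by auto
  have hv1: "h (v 1) = hv" using h_inv[of 0] unfolding hv_def by simp
  have hw1: "h (w 1) = hw" using h_inv[of 0] unfolding hw_def by simp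
  have t0: "0 < t" unfolding t_def using p0 by simp
  have "t \<le> pi / 2" unfolding t_def using assms(1) p0 by (simp add: field_simps)
  hence tpi: "t < pi" using pi_gt_zero by linarith
  have x0: "0 < x" unfolding x_def using assms(2) by simp
  have xt: "x < t" unfolding x_def t_def using assms(3) p0 by (simp add: field_simps)
  have v0: "v 0 = cis 0" using v_def[of 0] by simp
  have v1: "v 1 = cis (0 + 2 * t)" using v_def[of 1] unfolding t_def by simp
  have v1': "v 1 = cis (\<phi> + 2 * (t - x))" using v_def[of 1] unfolding t_def x_def by simp
  have w0: "w 0 = cis \<phi>" using w_def[of 0] by simp
  have w0': "w 0 = cis (0 + 2 * x)" using w_def[of 0] unfolding x_def by simp
  have w1: "w 1 = cis (\<phi> + 2 * t)" using w_def[of 1] unfolding t_def by simp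
  define A where "A = (1 - hv) / hv"
  define B where "B = (1 - hw) / hw"
  have A0: "A > 0" unfolding A_def using hv by simp
  have B0: "B > 0" unfolding B_def using hw by simp
  have c: "c = sin t * A"
    using lam_cis[OF t0 tpi hv hv v0 v1] A0 unfolding c_def hv1 hv_def[symmetric] A_def[symmetric]
    by simp
  have c': "c' = sin t * B"
    using lam_cis[OF t0 tpi hw hw w0 w1] B0 unfolding c'_def hw1 hw_def[symmetric] B_def[symmetric]
    by simp
  have a: "a = sin x * sqrt (A * B)"
    using lam_cis[OF x0 _ hv hw v0 w0'] xt tpi unfolding a_def hv_def[symmetric] hw_def[symmetric]
      A_def[symmetric] B_def[symmetric] by simp
  have b: "b = sin (t - x) * sqrt (A * B)"
    using lam_cis[of "t - x" hw hv "w 0" \<phi> "v 1", OF _ _ hw hv w0 v1'] xt tpi x0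
    unfolding b_def hv1 hv_def[symmetric] hw_def[symmetric]
      A_def[symmetric] B_def[symmetric] by (simp add: mult.commute)
  have sq: "(sqrt (A * B))^2 = A * B" using A0 B0 by simp
  have "a^2 + 2 * cos t * a * b + b^2 = ((sin x)^2 + 2 * cos t * sin x * sin (t - x) + (sin (t - x))^2) * (sqrt (A * B))^2"
    unfolding a b by algebra
  also have "\<dots> = (sin t)^2 * (A * B)" unfolding sq trig_id[of t x, symmetric] ..
  also have "\<dots> = c * c'" unfolding c c' by (simp add: power2_eq_square)
  finally show ?thesis unfolding t_def by simp
qed

end
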